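(* Let $(V,e)$ be a unital $\ast$-normed space, let $\varepsilon>1/\|e\|$, put $S_{\varepsilon}=V_{he}^{\ast}\cap\varepsilon\operatorname{ball}V^{\ast}$ and $\mathfrak{c}_{\varepsilon}=\{v\in V_h:\langle v,\varphi\rangle\ge 0\ \forall\varphi\in S_{\varepsilon}\}$. Then $\mathfrak{c}_{\varepsilon}$ is a separated, closed, unital cone in $V$ whose state space satisfies $S(\mathfrak{c}_{\varepsilon})=S_{\varepsilon}$, and $(V,\mathfrak{c}_{\varepsilon})$ is a concrete function system on $S_{\varepsilon}$ whose $\varepsilon$-norm $\|v\|_{\varepsilon}=\sup\{|\langle v,\varphi\rangle|:\varphi\in S_{\varepsilon}\}$ is equivalent to the original norm of $V$.
   Context: A $\ast$-normed space is a complex vector space $V$ with an involution and a norm with $\|v^{\ast}\|=\|v\|$. $V_h$ is the real space of hermitian elements; $V^{\ast}$ has involution $\langle v,\varphi^{\ast}\rangle=\overline{\langle v^{\ast},\varphi\rangle}$, and $V_h^{\ast}$ is the set of bounded hermitian functionals. For nonzero $e\in V_h$, $V_{he}^{\ast}=\{y\in V_h^{\ast}:\langle e,y\rangle=1\}$; $(V,e)$ is a unital $\ast$-normed space if $V_{he}^{\ast}\cap\operatorname{ball}V^{\ast}\neq\varnothing$. A cone $\mathfrak{c}\subseteq V_h$ is separated if $\mathfrak{c}\cap(-\mathfrak{c})=\{0\}$, unital if for every $v\in V_h$ there is $r\ge0$ with $v+re\in\mathfrak{c}$; its state space is $S(\mathfrak{c})=\{\varphi:V\to\mathbb{C}\text{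 linear}:\langle\mathfrak{c},\varphi\rangle\ge0,\ \langle e,\varphi\rangle=1\}$. "$(V,\mathfrak{c})$ is a concrete function system on $K$" (with $K$ a weak$^*$-compact set of states carrying the weak$^*$ topology) means that the unital $\ast$-linear map $\Phi:V\to C(K)$, $\Phi(v)(\varphi)=\langle v,\varphi\rangle$, is an isometry from $(V,\sup_{\varphi\in K}|\langle\cdot,\varphi\rangle|)$ onto its range and an order isomorphism onto its range: $\Phi(\mathfrak{c})=\Phi(V_h)\cap C(K)_+$. *)

theory Defs
  imports "HOL-Analysis.Analysis"
begin

text \<open>A complex normed space is modelled as a real normed vector space 'v (whose
topology is the norm topology) together with a complex scalar multiplication sm
extending the real one and satisfying norm (sm a x) = cmod a * norm x.\<close>

definition star_normed_space :: "(complex \<Rightarrow> 'v::real_normed_vector \<Rightarrow> 'v) \<Rightarrow> ('v \<Rightarrow> 'v) \<Rightarrow> bool" where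
  "star_normed_space sm st \<longleftrightarrow>
     (\<forall>r x. sm (complex_of_real r) x = scaleR r x) \<and>
     (\<forall>a b x. sm (a + b) x = sm a x + sm b x) \<and>
     (\<forall>a x y. sm a (x + y) = sm a x + sm a y) \<and>
     (\<forall>a b x. sm a (sm b x) = sm (a * b) x) \<and>
     (\<forall>a x. norm (sm a x) = cmod a * norm x) \<and>
     (\<forall>x. st (st x) = x) \<and>
     (\<forall>x y. st (x + y) = st x + st y) \<and>
     (\<forall>a x. st (sm a x) = sm (cnj a) (st x)) \<and>
     (\<forall>x. norm (st x) = norm x)"

definition clin_fun :: "(complex \<Rightarrow> 'v::real_normed_vector \<Rightarrow> 'v) \<Rightarrow> ('v \<Rightarrow> complex) \<Rightarrow> bool" where
  "clin_fun sm \<phi> \<longleftrightarrow> (\<forall>x y. \<phi> (x + y) = \<phi> x + \<phi> y) \<and> (\<forall>a x. \<phi> (sm a x) = a * \<phi> x)"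

definition bdd_fun :: "('v::real_normed_vector \<Rightarrow> complex) \<Rightarrow> bool" where
  "bdd_fun \<phi> \<longleftrightarrow> (\<exists>K. \<forall>x. cmod (\<phi> x) \<le> K * norm x)"

definition dual_norm :: "('v::real_normed_vector \<Rightarrow> complex) \<Rightarrow> real" where
  "dual_norm \<phi> = (SUP x\<in>{x. norm x \<le> 1}. cmod (\<phi> x))"

definition dual_space :: "(complex \<Rightarrow> 'v::real_normed_vector \<Rightarrow> 'v) \<Rightarrow> ('v \<Rightarrow> complex) set" where
  "dual_space sm = {\<phi>. clin_fun sm \<phi> \<and> bdd_fun \<phi>}"

definition dual_ball :: "(complex \<Rightarrow> 'v::real_normed_vector \<Rightarrow> 'v) \<Rightarrow> real \<Rightarrow> ('v \<Rightarrow> complex) set" where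
  "dual_ball sm r = {\<phi>\<in>dual_space sm. dual_norm \<phi> \<le> r}"

definition fun_star :: "('v \<Rightarrow> 'v) \<Rightarrow> ('v \<Rightarrow> complex) \<Rightarrow> ('v \<Rightarrow> complex)" where
  "fun_star st \<phi> = (\<lambda>v. cnj (\<phi> (st v)))"

definition herm_part :: "('v \<Rightarrow> 'v) \<Rightarrow> 'v set" where
  "herm_part st = {v. st v = v}"

definition dual_herm :: "(complex \<Rightarrow> 'v::real_normed_vector \<Rightarrow> 'v) \<Rightarrow> ('v \<Rightarrow> 'v) \<Rightarrow> ('v \<Rightarrow> complex) set" where
  "dual_herm sm st = {\<phi>\<in>dual_space sm. fun_star st \<phi> = \<phi>}"

definition dual_herm_e :: "(complex \<Rightarrow> 'v::real_normed_vector \<Rightarrow> 'v) \<Rightarrow> ('v \<Rightarrow> 'v) \<Rightarrow> 'v \<Rightarrow> ('v \<Rightarrow> complex) set" where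
  "dual_herm_e sm st e = {\<phi>\<in>dual_herm sm st. \<phi> e = 1}"

definition unital_star_normed_space :: "(complex \<Rightarrow> 'v::real_normed_vector \<Rightarrow> 'v) \<Rightarrow> ('v \<Rightarrow> 'v) \<Rightarrow> 'v \<Rightarrow> bool" where
  "unital_star_normed_space sm st e \<longleftrightarrow> star_normed_space sm st \<and> e \<in> herm_part st \<and> e \<noteq> 0 \<and>
     dual_herm_e sm st e \<inter> dual_ball sm 1 \<noteq> {}"

definition is_cone :: "('v \<Rightarrow> 'v) \<Rightarrow> 'v::real_normed_vector set \<Rightarrow> bool" where
  "is_cone st c \<longleftrightarrow> c \<subseteq> herm_part st \<and> c \<noteq> {} \<and>
     (\<forall>x\<in>c. \<forall>y\<in>c. x + y \<in> c) \<and> (\<forall>x\<in>c. \<forall>r::real. r \<ge> 0 \<longrightarrow> scaleR r x \<in> c)"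

definition separated_cone :: "'v::real_normed_vector set \<Rightarrow> bool" where
  "separated_cone c \<longleftrightarrow> c \<inter> uminus ` c = {0}"

definition unital_cone :: "('v \<Rightarrow> 'v) \<Rightarrow> 'v::real_normed_vector \<Rightarrow> 'v set \<Rightarrow> bool" where
  "unital_cone st e c \<longleftrightarrow> (\<forall>v\<in>herm_part st. \<exists>r::real. r \<ge> 0 \<and> v + scaleR r e \<in> c)"

definition cnonneg :: "complex \<Rightarrow> bool" where
  "cnonneg z \<longleftrightarrow> Im z = 0 \<and> 0 \<le> Re z"

text \<open>State space S(c): all linear functionals (not assumed bounded), positive on c, 1 at e.\<close>
definition state_space :: "(complex \<Rightarrow> 'v::real_normed_vector \<Rightarrow> 'v) \<Rightarrow> 'v \<Rightarrow> 'v set \<Rightarrow> ('v \<Rightarrow> complex) set" where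
  "state_space sm e c = {\<phi>. clin_fun sm \<phi> \<and> (\<forall>v\<in>c. cnonneg (\<phi> v)) \<and> \<phi> e = 1}"

text \<open>Functions 'v \<Rightarrow> complex carry the
product (pointwise) topology, which on sets of functionals is the weak* topology.\<close>
definition concrete_function_system ::
  "(complex \<Rightarrow> 'v::real_normed_vector \<Rightarrow> 'v) \<Rightarrow> ('v \<Rightarrow> 'v) \<Rightarrow> 'v \<Rightarrow> 'v set \<Rightarrow> ('v \<Rightarrow> complex) set \<Rightarrow> bool" where
  "concrete_function_system sm st e c K \<longleftrightarrow>
     K \<subseteq> state_space sm e c \<and> compact K \<and>
     (\<forall>v. continuous_on K (\<lambda>\<phi>. \<phi> v)) \<and>
     (\<forall>\<phi>\<in>K. \<phi> e = 1) \<and>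
     (\<forall>v. \<forall>\<phi>\<in>K. \<phi> (st v) = cnj (\<phi> v)) \<and>
     inj_on (\<lambda>v. restrict (\<lambda>\<phi>. \<phi> v) K) UNIV \<and>
     (\<lambda>v. restrict (\<lambda>\<phi>. \<phi> v) K) ` c =
       (\<lambda>v. restrict (\<lambda>\<phi>. \<phi> v) K) ` herm_part st \<inter> {f. \<forall>\<phi>\<in>K. cnonneg (f \<phi>)}"

definition S_eps :: "(complex \<Rightarrow> 'v::real_normed_vector \<Rightarrow> 'v) \<Rightarrow> ('v \<Rightarrow> 'v) \<Rightarrow> 'v \<Rightarrow> real \<Rightarrow> ('v \<Rightarrow> complex) set" where
  "S_eps sm st e \<epsilon> = dual_herm_e sm st e \<inter> dual_ball sm \<epsilon>"

definition cone_eps :: "(complex \<Rightarrow> 'v::real_normed_vector \<Rightarrow> 'v) \<Rightarrow> ('v \<Rightarrow> 'v) \<Rightarrow> 'v \<Rightarrow> real \<Rightarrow> 'v set" where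
  "cone_eps sm st e \<epsilon> = {v\<in>herm_part st. \<forall>\<phi>\<in>S_eps sm st e \<epsilon>. cnonneg (\<phi> v)}"

definition norm_eps :: "(complex \<Rightarrow> 'v::real_normed_vector \<Rightarrow> 'v) \<Rightarrow> ('v \<Rightarrow> 'v) \<Rightarrow> 'v \<Rightarrow> real \<Rightarrow> 'v \<Rightarrow> real" where
  "norm_eps sm st e \<epsilon> v = (SUP \<phi>\<in>S_eps sm st e \<epsilon>. cmod (\<phi> v))"

end

theory Submission
  imports Defs
begin
definition sublin :: "('v::real_vector \<Rightarrow> real) \<Rightarrow> bool" where
  "sublin q \<longleftrightarrow> (\<forall>x y. q (x + y) \<le> q x + q y) \<and> (\<forall>t x. 0 \<le> t \<longrightarrow> q (t *\<^sub>R x) = t * q x)"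

definition dirinf :: "('v::real_vector \<Rightarrow> real) \<Rightarrow> 'v \<Rightarrow> 'v \<Rightarrow> real" where
  "dirinf q y x = Inf ((\<lambda>t. q (x + t *\<^sub>R y) - t * q y) ` {0..})"

lemma sublin_add: "sublin q \<Longrightarrow> q (x + y) \<le> q x + q y"
  by (simp add: sublin_def)
lemma sublin_hom: "sublin q \<Longrightarrow> 0 \<le> t \<Longrightarrow> q (t *\<^sub>R x) = t * q x"
  by (simp add: sublin_def)
lemma sublin_zero: "sublin q \<Longrightarrow> q 0 = 0"
  using sublin_hom[of q 0 0] by simp
lemma sublin_low: "sublin q \<Longrightarrow> - q (- x) \<le> q x"
  using sublin_add[of q x "-x"] sublin_zero[of q] by simp

lemma dirinf_low:
  assumes "sublin q" "0 \<le> t"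
  shows "- q (- x) \<le> q (x + t *\<^sub>R y) - t * q y"
proof -
  have "q (t *\<^sub>R y) \<le> q (x + t *\<^sub>R y) + q (- x)"
    using sublin_add[OF assms(1), of "x + t *\<^sub>R y" "-x"] by simp
  then show ?thesis using sublin_hom[OF assms] by simp
qed

lemma dirinf_bdd: "sublin q \<Longrightarrow> bdd_below ((\<lambda>t. q (x + t *\<^sub>R y) - t * q y) ` {0..})"
  unfolding bdd_below_def using dirinf_low by fastforce

lemma dirinf_le: "sublin q \<Longrightarrow> 0 \<le> t \<Longrightarrow> dirinf q y x \<le> q (x + t *\<^sub>R y) - t * q y"
  unfolding dirinf_def by (rule cInf_lower[OF _ dirinf_bdd]) auto

lemma dirinf_ge: "(\<And>t. 0 \<le> t \<Longrightarrow> c \<le> q (x + t *\<^sub>R y) - t * q y) \<Longrightarrow> c \<le> dirinf q y x"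
  unfolding dirinf_def by (rule cINF_greatest) auto

lemma dirinf_below: "sublin q \<Longrightarrow> dirinf q y x \<le> q x"
  using dirinf_le[of q 0 y x] by simp

lemma dirinf_sublin:
  assumes q: "sublin q"
  shows "sublin (dirinf q y)"
  unfolding sublin_def
proof (intro conjI allI impI)
  fix x1 x2
  have "dirinf q y (x1 + x2) \<le> dirinf q y x1 + dirinf q y x2"
  proof -
    have "dirinf q y (x1 + x2) - (q (x2 + s2 *\<^sub>R y) - s2 * q y) \<le> dirinf q y x1" if s2: "0 \<le> s2" for s2
    proof (rule dirinf_ge)
      fix s1 :: real assume s1: "0 \<le> s1"
      have "dirinf q y (x1 + x2) \<le> q ((x1 + x2) + (s1 + s2) *\<^sub>R y) - (s1 + s2) * q y"
        using dirinf_le[OF q] s1 s2 by simp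
      also have "q ((x1 + x2) + (s1 + s2) *\<^sub>R y) = q ((x1 + s1 *\<^sub>R y) + (x2 + s2 *\<^sub>R y))"
        by (simp add: algebra_simps)
      also have "\<dots> \<le> q (x1 + s1 *\<^sub>R y) + q (x2 + s2 *\<^sub>R y)" by (rule sublin_add[OF q])
      finally show "dirinf q y (x1 + x2) - (q (x2 + s2 *\<^sub>R y) - s2 * q y) \<le> q (x1 + s1 *\<^sub>R y) - s1 * q y"
        by (simp add: algebra_simps)
    qed
    then have "dirinf q y (x1 + x2) - dirinf q y x1 \<le> dirinf q y x2"
      by (intro dirinf_ge) (simp add: algebra_simps)
    then show ?thesis by simp
  qed
  then show "dirinf q y (x1 + x2) \<le> dirinf q y x1 + dirinf q y x2" .
next
  fix t :: real and x assume t: "0 \<le> t"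
  show "dirinf q y (t *\<^sub>R x) = t * dirinf q y x"
  proof (cases "t = 0")
    case True
    have "dirinf q y 0 \<le> 0" using dirinf_le[OF q, of 0 y 0] sublin_zero[OF q] by simp
    moreover have "0 \<le> dirinf q y 0"
      by (rule dirinf_ge) (simp add: sublin_hom[OF q])
    ultimately show ?thesis using True by simp
  next
    case False
    then have tp: "0 < t" using t by simp
    have "dirinf q y (t *\<^sub>R x) / t \<le> dirinf q y x"
    proof (rule dirinf_ge)
      fix s :: real assume s: "0 \<le> s"
      have "dirinf q y (t *\<^sub>R x) \<le> q (t *\<^sub>R x + (t * s) *\<^sub>R y) - (t * s) * q y"
        using dirinf_le[OF q] s t by simp
      also have "q (t *\<^sub>R x + (t * s) *\<^sub>R y) = q (t *\<^sub>R (x + s *\<^sub>R y))"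
        by (simp add: algebra_simps)
      also have "\<dots> = t * q (x + s *\<^sub>R y)" using sublin_hom[OF q t] .
      finally show "dirinf q y (t *\<^sub>R x) / t \<le> q (x + s *\<^sub>R y) - s * q y"
        using tp by (simp add: field_simps)
    qed
    moreover have "t * dirinf q y x \<le> dirinf q y (t *\<^sub>R x)"
    proof (rule dirinf_ge)
      fix s :: real assume s: "0 \<le> s"
      have "dirinf q y x \<le> q (x + (s / t) *\<^sub>R y) - (s / t) * q y"
        using dirinf_le[OF q, of "s / t" y x] s tp by simp
      then have "t * dirinf q y x \<le> t * (q (x + (s / t) *\<^sub>R y) - (s / t) * q y)"
        using tp by simp
      also have "\<dots> = q (t *\<^sub>R (x + (s / t) *\<^sub>R y)) - s * q y"
        using sublin_hom[OF q t, of "x + (s / t) *\<^sub>R y"] tp by (simp add: algebra_simps)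
      also have "t *\<^sub>R (x + (s / t) *\<^sub>R y) = t *\<^sub>R x + s *\<^sub>R y"
        using tp by (simp add: algebra_simps)
      finally show "t * dirinf q y x \<le> q (t *\<^sub>R x + s *\<^sub>R y) - s * q y" .
    qed
    ultimately show ?thesis using tp by (simp add: field_simps)
  qed
qed

lemma sublin_norm: "sublin (norm :: 'v::real_normed_vector \<Rightarrow> real)"
  unfolding sublin_def by (simp add: norm_triangle_ineq)

lemma real_HB:
  fixes x0 :: "'v::real_normed_vector"
  shows "\<exists>f. (\<forall>x y. f (x + y) = f x + f y) \<and> (\<forall>r x. f (r *\<^sub>R x) = r * f x) \<and>
             (\<forall>x. \<bar>f x\<bar> \<le> norm x) \<and> f x0 = norm x0"
proof -
  define p0 where "p0 = dirinf (norm :: 'v \<Rightarrow> real) x0"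
  have p0s: "sublin p0" unfolding p0_def by (rule dirinf_sublin[OF sublin_norm])
  define A where "A = {q. sublin q \<and> (\<forall>x. q x \<le> p0 x)}"
  define P where "P = (\<lambda>(q::'v \<Rightarrow> real) q'. \<forall>x. q' x \<le> q x)"
  have po: "partial_order_on A (relation_of P A)"
    unfolding partial_order_on_def preorder_on_def refl_on_def trans_def antisym_def relation_of_def P_def
    by (auto intro!: ext intro: order_trans order_antisym)
  have ch: "\<exists>u\<in>A. \<forall>a\<in>C. P a u" if C: "C \<in> Chains (relation_of P A)" for C
  proof (cases "C = {}")
    case True
    then show ?thesis using p0s unfolding A_def by auto
  next
    case False
    have CA: "C \<subseteq> A" using C unfolding Chains_def relation_of_def by auto
    have tot: "P a b \<or> P b a" if "a \<in> C" "b \<in> C" for a b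
      using C that unfolding Chains_def relation_of_def by auto
    define u where "u = (\<lambda>x. Inf ((\<lambda>q. q x) ` C))"
    have bdd: "bdd_below ((\<lambda>q. q x) ` C)" for x
    proof -
      have "- p0 (- x) \<le> q x" if "q \<in> C" for q
      proof -
        have "sublin q" "q (- x) \<le> p0 (- x)" using that CA unfolding A_def by auto
        then show ?thesis using sublin_low[of q x] by linarith
      qed
      then show ?thesis unfolding bdd_below_def by auto
    qed
    have ule: "u x \<le> q x" if "q \<in> C" for q x
      unfolding u_def by (rule cInf_lower[OF _ bdd]) (use that in auto)
    have uge: "c \<le> u x" if "\<And>q. q \<in> C \<Longrightarrow> c \<le> q x" for c x
      unfolding u_def using False that by (intro cINF_greatest) auto
    have sq: "sublin q" if "q \<in> C" for q using that CA unfolding A_def by auto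
    have us: "sublin u"
      unfolding sublin_def
    proof (intro conjI allI impI)
      fix x y
      have "u (x + y) - q2 y \<le> u x" if q2: "q2 \<in> C" for q2
      proof (rule uge)
        fix q1 assume q1: "q1 \<in> C"
        from tot[OF q1 q2] show "u (x + y) - q2 y \<le> q1 x"
        proof
          assume "P q1 q2"
          then have "u (x + y) \<le> q2 x + q2 y" using ule[OF q2] sublin_add[OF sq[OF q2]] order_trans by blast
          then show ?thesis using \<open>P q1 q2\<close> unfolding P_def by (smt (verit))
        next
          assume "P q2 q1"
          then have "u (x + y) \<le> q1 x + q1 y" using ule[OF q1] sublin_add[OF sq[OF q1]] order_trans by blast
          then show ?thesis using \<open>P q2 q1\<close> unfolding P_def by (smt (verit))
        qed
      qed
      then have "u (x + y) - u x \<le> u y" by (intro uge) (smt (verit))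
      then show "u (x + y) \<le> u x + u y" by simp
    next
      fix t :: real and x assume t: "0 \<le> t"
      show "u (t *\<^sub>R x) = t * u x"
      proof (cases "t = 0")
        case True
        obtain q where "q \<in> C" using False by auto
        then have "u 0 \<le> 0" using ule[of q 0] sublin_zero[OF sq] by fastforce
        moreover have "0 \<le> u 0" by (rule uge) (simp add: sublin_zero[OF sq])
        ultimately show ?thesis using True by simp
      next
        case f: False
        then have tp: "0 < t" using t by simp
        have hq: "q (t *\<^sub>R x) = t * q x" if "q \<in> C" for q
          using sublin_hom[OF sq[OF that] t] .
        have "u (t *\<^sub>R x) / t \<le> u x"
        proof (rule uge)
          fix q assume "q \<in> C"
          then show "u (t *\<^sub>R x) / t \<le> q x" using ule[of q "t *\<^sub>R x"] hq[of q] tp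
            by (simp add: field_simps)
        qed
        moreover have "t * u x \<le> u (t *\<^sub>R x)"
        proof (rule uge)
          fix q assume "q \<in> C"
          then show "t * u x \<le> q (t *\<^sub>R x)" using ule[of q x] hq[of q] tp
            by simp
        qed
        ultimately show ?thesis using tp by (simp add: field_simps)
      qed
    qed
    have "u x \<le> p0 x" for x
    proof -
      obtain q where q: "q \<in> C" using False by auto
      then have "q x \<le> p0 x" using CA unfolding A_def by auto
      then show ?thesis using ule[OF q, of x] by linarith
    qed
    then have "u \<in> A" unfolding A_def using us by auto
    moreover have "\<forall>a\<in>C. P a u" unfolding P_def using ule by auto
    ultimately show ?thesis by blast
  qed
  obtain m where mA: "m \<in> A" and mmax: "\<And>a. a \<in> A \<Longrightarrow> P m a \<Longrightarrow> a = m"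
    using predicate_Zorn[OF po ch] by blast
  have ms: "sublin m" and mp: "\<And>x. m x \<le> p0 x" using mA unfolding A_def by auto
  have madd: "m (x + y) = m x + m y" for x y
  proof -
    have "dirinf m y x' \<le> p0 x'" for x'
      using dirinf_below[OF ms, of y x'] mp[of x'] by linarith
    then have "dirinf m y \<in> A" unfolding A_def using dirinf_sublin[OF ms] by auto
    moreover have "P m (dirinf m y)" unfolding P_def using dirinf_below[OF ms] by auto
    ultimately have "dirinf m y = m" using mmax by blast
    then have "m x \<le> m (x + 1 *\<^sub>R y) - 1 * m y" using dirinf_le[OF ms, of 1 y x] by simp
    then show ?thesis using sublin_add[OF ms, of x y] by simp
  qed
  have mneg: "m (- x) = - m x" for x
    using madd[of x "-x"] sublin_zero[OF ms] by simp
  have mhom: "m (r *\<^sub>R x) = r * m x" for r x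
  proof (cases "0 \<le> r")
    case True then show ?thesis using sublin_hom[OF ms] by simp
  next
    case False
    then have "m (r *\<^sub>R x) = m (- ((- r) *\<^sub>R x))" by simp
    also have "\<dots> = - ((- r) * m x)" using mneg sublin_hom[OF ms, of "-r" x] False by simp
    finally show ?thesis by simp
  qed
  have p0le: "p0 x \<le> norm x" for x
    unfolding p0_def using dirinf_below[OF sublin_norm] .
  have mle: "m x \<le> norm x" for x using mp[of x] p0le[of x] by simp
  have "m (- x0) \<le> - norm x0"
  proof -
    have "p0 (- x0) \<le> norm (- x0 + 1 *\<^sub>R x0) - 1 * norm x0"
      unfolding p0_def by (rule dirinf_le[OF sublin_norm]) simp
    then show ?thesis using mp[of "-x0"] by simp
  qed
  then have "m x0 = norm x0" using mle[of x0] mneg[of x0] by simp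
  moreover have "\<bar>m x\<bar> \<le> norm x" for x using mle[of x] mle[of "-x"] mneg[of x] by simp
  ultimately show ?thesis using madd mhom by blast
qed

locale sns =
  fixes sm :: "complex \<Rightarrow> 'v::real_normed_vector \<Rightarrow> 'v" and st :: "'v \<Rightarrow> 'v"
  assumes sns: "star_normed_space sm st"
begin

lemma sm_real: "sm (complex_of_real r) x = r *\<^sub>R x" using sns by (simp add: star_normed_space_def)
lemma sm_addl: "sm (a + b) x = sm a x + sm b x" using sns by (simp add: star_normed_space_def)
lemma sm_addr: "sm a (x + y) = sm a x + sm a y" using sns by (simp add: star_normed_space_def)
lemma sm_assoc: "sm a (sm b x) = sm (a * b) x" using sns by (simp add: star_normed_space_def)
lemma norm_sm: "norm (sm a x) = cmod a * norm x" using sns by (simp add: star_normed_space_def)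
lemma st_st: "st (st x) = x" using sns by (simp add: star_normed_space_def)
lemma st_add: "st (x + y) = st x + st y" using sns by (simp add: star_normed_space_def)
lemma st_sm: "st (sm a x) = sm (cnj a) (st x)" using sns by (simp add: star_normed_space_def)
lemma norm_st: "norm (st x) = norm x" using sns by (simp add: star_normed_space_def)

lemma sm_one: "sm 1 x = x" using sm_real[of 1 x] by simp
lemma sm_zero_r: "sm a 0 = 0" using sm_addr[of a 0 0] by simp
lemma sm_minus_r: "sm a (- x) = - sm a x" using sm_addr[of a x "-x"] sm_zero_r[of a]
  by (simp add: eq_neg_iff_add_eq_0 add.commute)
lemma sm_diff_r: "sm a (x - y) = sm a x - sm a y"
  using sm_addr[of a x "-y"] sm_minus_r by simp
lemma st_zero: "st 0 = 0" using st_add[of 0 0] by simp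
lemma st_minus: "st (- x) = - st x" using st_add[of x "-x"] st_zero
  by (simp add: eq_neg_iff_add_eq_0 add.commute)
lemma st_diff: "st (x - y) = st x - st y" using st_add[of x "-y"] st_minus by simp
lemma st_scaleR: "st (r *\<^sub>R x) = r *\<^sub>R st x"
  using st_sm[of "complex_of_real r" x] by (simp add: sm_real)
lemma sm_ii: "sm \<i> (sm \<i> x) = - x"
  using sm_assoc[of \<i> \<i> x] sm_real[of "-1" x] by simp

lemma clin_add: "clin_fun sm \<phi> \<Longrightarrow> \<phi> (x + y) = \<phi> x + \<phi> y" by (simp add: clin_fun_def)
lemma clin_sm: "clin_fun sm \<phi> \<Longrightarrow> \<phi> (sm a x) = a * \<phi> x" by (simp add: clin_fun_def)
lemma clin_zero: "clin_fun sm \<phi> \<Longrightarrow> \<phi> 0 = 0" using clin_add[of \<phi> 0 0] by simp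
lemma clin_minus: "clin_fun sm \<phi> \<Longrightarrow> \<phi> (- x) = - \<phi> x"
  using clin_add[of \<phi> x "-x"] clin_zero[of \<phi>] by (simp add: eq_neg_iff_add_eq_0 add.commute)
lemma clin_diff: "clin_fun sm \<phi> \<Longrightarrow> \<phi> (x - y) = \<phi> x - \<phi> y"
  using clin_add[of \<phi> x "-y"] clin_minus[of \<phi> y] by simp
lemma clin_scaleR: "clin_fun sm \<phi> \<Longrightarrow> \<phi> (r *\<^sub>R x) = complex_of_real r * \<phi> x"
  using clin_sm[of \<phi> "complex_of_real r" x] by (simp add: sm_real)

definition hp :: "'v \<Rightarrow> 'v" where "hp v = (1/2) *\<^sub>R (v + st v)"
definition kp :: "'v \<Rightarrow> 'v" where "kp v = sm (- \<i> / 2) (v - st v)"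

lemma hp_herm: "st (hp v) = hp v"
  unfolding hp_def by (simp add: st_scaleR st_add st_st add.commute)
lemma kp_herm: "st (kp v) = kp v"
proof -
  have "st (kp v) = sm (\<i> / 2) (st v - v)" unfolding kp_def by (simp add: st_sm st_diff st_st)
  also have "\<dots> = sm (- \<i> / 2) (v - st v)"
  proof -
    have "st v - v = sm (-1) (v - st v)" using sm_real[of "-1" "v - st v"] by simp
    then show ?thesis by (simp add: sm_assoc)
  qed
  finally show ?thesis unfolding kp_def .
qed
lemma decomp: "v = hp v + sm \<i> (kp v)"
proof -
  have "sm \<i> (kp v) = sm (1/2) (v - st v)" unfolding kp_def by (simp add: sm_assoc)
  also have "\<dots> = (1/2) *\<^sub>R (v - st v)" using sm_real[of "1/2"] by simp
  finally have "hp v + sm \<i> (kp v) = (1/2) *\<^sub>R (v + st v) + (1/2) *\<^sub>R (v - st v)"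
    unfolding hp_def by simp
  also have "\<dots> = ((1/2) + (1/2)) *\<^sub>R v" by (simp only: scaleR_left_distrib scaleR_right_distrib scaleR_diff_right) simp
  finally show ?thesis by simp
qed
lemma norm_hp: "norm (hp v) \<le> norm v"
proof -
  have "norm (hp v) \<le> (1/2) * (norm v + norm (st v))"
    unfolding hp_def using norm_triangle_ineq[of v "st v"] by simp
  then show ?thesis by (simp add: norm_st)
qed
lemma norm_kp: "norm (kp v) \<le> norm v"
proof -
  have "norm (kp v) = (1/2) * norm (v - st v)" unfolding kp_def by (simp add: norm_sm norm_divide)
  also have "\<dots> \<le> (1/2) * (norm v + norm (st v))"
    using norm_triangle_ineq4[of v "st v"] by simp
  finally show ?thesis by (simp add: norm_st)
qed

definition hermf :: "('v \<Rightarrow> complex) \<Rightarrow> bool" where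
  "hermf \<phi> \<longleftrightarrow> (\<forall>v. \<phi> (st v) = cnj (\<phi> v))"

lemma hermf_real: "hermf \<phi> \<Longrightarrow> st h = h \<Longrightarrow> \<phi> h = complex_of_real (Re (\<phi> h))"
proof -
  assume a: "hermf \<phi>" "st h = h"
  then have "cnj (\<phi> h) = \<phi> h" unfolding hermf_def by metis
  then have "Im (cnj (\<phi> h)) = Im (\<phi> h)" by simp
  then have "Im (\<phi> h) = 0" by simp
  then show ?thesis by (simp add: complex_eq_iff)
qed

lemma hermf_bound:
  assumes c: "clin_fun sm \<phi>" and h: "hermf \<phi>" and C: "0 \<le> C"
    and b: "\<And>h. st h = h \<Longrightarrow> cmod (\<phi> h) \<le> C * norm h"
  shows "cmod (\<phi> v) \<le> C * norm v"
proof (cases "\<phi> v = 0")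
  case True
  then show ?thesis using C by simp
next
  case False
  define z where "z = \<phi> v"
  have zn: "z \<noteq> 0" using False z_def by simp
  define l where "l = cnj z / complex_of_real (cmod z)"
  have cl: "cmod l = 1" using zn unfolding l_def by (simp add: norm_divide)
  define w where "w = sm l v"
  have "\<phi> w = l * z" unfolding w_def z_def using clin_sm[OF c] by simp
  also have "\<dots> = cnj z * z / complex_of_real (cmod z)" unfolding l_def by simp
  also have "cnj z * z = complex_of_real (cmod z) * complex_of_real (cmod z)"
    using complex_norm_square[of z] by (simp add: power2_eq_square mult.commute)
  finally have pw: "\<phi> w = complex_of_real (cmod z)" using zn by simp
  have "\<phi> (hp w) = complex_of_real (1/2) * (\<phi> w + cnj (\<phi> w))"
    unfolding hp_def using clin_scaleR[OF c] clin_add[OF c] h unfolding hermf_def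
    by simp
  also have "\<dots> = complex_of_real (cmod z)" using pw by simp
  finally have "cmod (\<phi> (hp w)) = cmod z" by simp
  moreover have "cmod (\<phi> (hp w)) \<le> C * norm (hp w)" using b[OF hp_herm] .
  moreover have "C * norm w = C * norm v" unfolding w_def using cl by (simp add: norm_sm)
  moreover have "C * norm (hp w) \<le> C * norm w" using norm_hp C by (simp add: mult_left_mono)
  ultimately show ?thesis unfolding z_def by linarith
qed

lemma sm_decomp: "sm a v = Re a *\<^sub>R v + Im a *\<^sub>R sm \<i> v"
proof -
  have "a = complex_of_real (Re a) + complex_of_real (Im a) * \<i>" by (simp add: complex_eq_iff)
  then have "sm a v = sm (complex_of_real (Re a)) v + sm (complex_of_real (Im a) * \<i>) v"
    by (metis sm_addl)
  also have "\<dots> = Re a *\<^sub>R v + Im a *\<^sub>R sm \<i> v" by (simp add: sm_real sm_assoc[symmetric])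
  finally show ?thesis .
qed

lemma complex_HB:
  assumes hh: "st h = h"
  shows "\<exists>\<Phi>. clin_fun sm \<Phi> \<and> hermf \<Phi> \<and> (\<forall>v. cmod (\<Phi> v) \<le> norm v) \<and> \<Phi> h = complex_of_real (norm h)"
proof -
  obtain f :: "'v \<Rightarrow> real" where fadd: "\<And>x y. f (x + y) = f x + f y"
    and fhom: "\<And>r x. f (r *\<^sub>R x) = r * f x" and fb: "\<And>x. \<bar>f x\<bar> \<le> norm x" and fh: "f h = norm h"
    using real_HB[of h] by blast
  define \<psi> where "\<psi> v = Complex (f v) (- f (sm \<i> v))" for v
  have fsm: "f (sm a v) = Re a * f v + Im a * f (sm \<i> v)" for a v
    using sm_decomp[of a v] fadd fhom by simp
  have psi_c: "clin_fun sm \<psi>"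
    unfolding clin_fun_def
  proof (intro conjI allI)
    fix x y show "\<psi> (x + y) = \<psi> x + \<psi> y" unfolding \<psi>_def by (simp add: sm_addr fadd complex_eq_iff)
  next
    fix a x
    have "f (sm \<i> (sm a x)) = - Im a * f x + Re a * f (sm \<i> x)"
      using fsm[of "\<i> * a" x] by (simp add: sm_assoc)
    then show "\<psi> (sm a x) = a * \<psi> x" unfolding \<psi>_def using fsm[of a x]
      by (simp add: complex_eq_iff)
  qed
  have psi_b: "cmod (\<psi> v) \<le> norm v" for v
  proof (cases "\<psi> v = 0")
    case True then show ?thesis by simp
  next
    case False
    define z where "z = \<psi> v"
    have zn: "z \<noteq> 0" using False z_def by simp
    define l where "l = cnj z / complex_of_real (cmod z)"
    have cl: "cmod l = 1" using zn unfolding l_def by (simp add: norm_divide)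
    have "\<psi> (sm l v) = l * z" unfolding z_def using clin_sm[OF psi_c] by simp
    also have "\<dots> = cnj z * z / complex_of_real (cmod z)" unfolding l_def by simp
    also have "cnj z * z = complex_of_real (cmod z) * complex_of_real (cmod z)"
      using complex_norm_square[of z] by (simp add: power2_eq_square mult.commute)
    finally have pw: "\<psi> (sm l v) = complex_of_real (cmod z)" using zn by simp
    then have "cmod z = f (sm l v)" unfolding \<psi>_def by (simp add: complex_eq_iff)
    also have "\<dots> \<le> norm (sm l v)" using fb[of "sm l v"] by simp
    also have "\<dots> = norm v" using cl by (simp add: norm_sm)
    finally show ?thesis unfolding z_def .
  qed
  define \<Phi> where "\<Phi> v = (\<psi> v + cnj (\<psi> (st v))) / 2" for v
  have "clin_fun sm \<Phi>"
    unfolding clin_fun_def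
  proof (intro conjI allI)
    fix x y show "\<Phi> (x + y) = \<Phi> x + \<Phi> y" unfolding \<Phi>_def
      by (simp add: st_add clin_add[OF psi_c] add_divide_distrib)
  next
    fix a x show "\<Phi> (sm a x) = a * \<Phi> x" unfolding \<Phi>_def
      by (simp add: st_sm clin_sm[OF psi_c] algebra_simps)
  qed
  moreover have "hermf \<Phi>" unfolding hermf_def \<Phi>_def by (simp add: st_st)
  moreover have "cmod (\<Phi> v) \<le> norm v" for v
  proof -
    have "cmod (\<Phi> v) \<le> (cmod (\<psi> v) + cmod (cnj (\<psi> (st v)))) / 2"
      unfolding \<Phi>_def using norm_triangle_ineq[of "\<psi> v" "cnj (\<psi> (st v))"] by (simp add: norm_divide)
    also have "\<dots> \<le> (norm v + norm (st v)) / 2" using psi_b[of v] psi_b[of "st v"] by simp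
    finally show ?thesis by (simp add: norm_st)
  qed
  moreover have "\<Phi> h = complex_of_real (norm h)"
    unfolding \<Phi>_def hh using fh unfolding \<psi>_def by (simp add: complex_eq_iff)
  ultimately show ?thesis by blast
qed

end

lemma dn_bound:
  assumes "\<phi> \<in> dual_space sm" "star_normed_space sm st"
  shows "cmod (\<phi> x) \<le> dual_norm \<phi> * norm x"
proof -
  interpret sns sm st by unfold_locales (rule assms(2))
  have c: "clin_fun sm \<phi>" and "bdd_fun \<phi>" using assms(1) unfolding dual_space_def by auto
  then obtain K where K: "\<And>x. cmod (\<phi> x) \<le> K * norm x" unfolding bdd_fun_def by blast
  have bdd: "bdd_above ((\<lambda>x. cmod (\<phi> x)) ` {x. norm x \<le> 1})"
  proof -
    have "cmod (\<phi> x) \<le> \<bar>K\<bar>" if "norm x \<le> 1" for x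
    proof -
      have "K * norm x \<le> \<bar>K\<bar> * norm x" by (simp add: mult_right_mono)
      also have "\<dots> \<le> \<bar>K\<bar> * 1" using that by (intro mult_left_mono) auto
      finally have "K * norm x \<le> \<bar>K\<bar> * 1" .
      then show ?thesis using K[of x] by simp
    qed
    then show ?thesis unfolding bdd_above_def by auto
  qed
  show ?thesis
  proof (cases "x = 0")
    case True then show ?thesis using clin_zero[OF c] by simp
  next
    case False
    define y where "y = (1 / norm x) *\<^sub>R x"
    have "norm y = 1" unfolding y_def using False by simp
    then have "cmod (\<phi> y) \<le> dual_norm \<phi>" unfolding dual_norm_def
      by (intro cSUP_upper[OF _ bdd]) auto
    moreover have "cmod (\<phi> y) = cmod (\<phi> x) / norm x" unfolding y_def
      by (simp add: clin_scaleR[OF c] norm_mult norm_divide)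
    ultimately show ?thesis using False by (simp add: field_simps)
  qed
qed

lemma dn_le:
  assumes "\<And>x. cmod (\<phi> x) \<le> C * norm x" "0 \<le> C"
  shows "dual_norm \<phi> \<le> C"
  unfolding dual_norm_def
proof (rule cSUP_least)
  show "{x::'a. norm x \<le> 1} \<noteq> {}" by (auto intro!: exI[of _ 0])
next
  fix x :: 'a assume "x \<in> {x. norm x \<le> 1}"
  then have "C * norm x \<le> C * 1" using assms(2) by (intro mult_left_mono) auto
  then show "cmod (\<phi> x) \<le> C" using assms(1)[of x] by simp
qed

locale ctx = sns sm st for sm :: "complex \<Rightarrow> 'v::real_normed_vector \<Rightarrow> 'v" and st +
  fixes e :: 'v and \<epsilon> :: real
  assumes eh: "st e = e" and en: "e \<noteq> 0" and eps: "\<epsilon> > 1 / norm e"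
begin

abbreviation "S \<equiv> S_eps sm st e \<epsilon>"

lemma ne_pos: "0 < norm e" using en by simp
lemma eps_pos: "0 < \<epsilon>"
proof -
  have "0 < 1 / norm e" using ne_pos by simp
  then show ?thesis using eps by linarith
qed

lemma S_char: "\<phi> \<in> S \<longleftrightarrow> clin_fun sm \<phi> \<and> hermf \<phi> \<and> \<phi> e = 1 \<and> (\<forall>v. cmod (\<phi> v) \<le> \<epsilon> * norm v)"
proof
  assume "\<phi> \<in> S"
  then have d: "\<phi> \<in> dual_space sm" and fs: "fun_star st \<phi> = \<phi>" and e1: "\<phi> e = 1"
    and dn: "dual_norm \<phi> \<le> \<epsilon>"
    unfolding S_eps_def dual_herm_e_def dual_herm_def dual_ball_def by auto
  have "clin_fun sm \<phi>" using d unfolding dual_space_def by auto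
  moreover have "hermf \<phi>" unfolding hermf_def
  proof
    fix v
    have "cnj (\<phi> (st v)) = \<phi> v" using fun_cong[OF fs, of v] unfolding fun_star_def by simp
    then show "\<phi> (st v) = cnj (\<phi> v)" by (metis complex_cnj_cnj)
  qed
  moreover have "cmod (\<phi> v) \<le> \<epsilon> * norm v" for v
    using dn_bound[OF d sns, of v] mult_right_mono[OF dn norm_ge_zero[of v]] by linarith
  ultimately show "clin_fun sm \<phi> \<and> hermf \<phi> \<and> \<phi> e = 1 \<and> (\<forall>v. cmod (\<phi> v) \<le> \<epsilon> * norm v)"
    using e1 by blast
next
  assume a: "clin_fun sm \<phi> \<and> hermf \<phi> \<and> \<phi> e = 1 \<and> (\<forall>v. cmod (\<phi> v) \<le> \<epsilon> * norm v)"
  then have d: "\<phi> \<in> dual_space sm" unfolding dual_space_def bdd_fun_def by blast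
  have "fun_star st \<phi> = \<phi>" unfolding fun_star_def using a unfolding hermf_def by auto
  moreover have "dual_norm \<phi> \<le> \<epsilon>" using a eps_pos by (intro dn_le) auto
  ultimately show "\<phi> \<in> S" using a d
    unfolding S_eps_def dual_herm_e_def dual_herm_def dual_ball_def by auto
qed

lemma S_clin: "\<phi> \<in> S \<Longrightarrow> clin_fun sm \<phi>" using S_char by blast
lemma S_herm: "\<phi> \<in> S \<Longrightarrow> hermf \<phi>" using S_char by blast
lemma S_e: "\<phi> \<in> S \<Longrightarrow> \<phi> e = 1" using S_char by blast
lemma S_bound: "\<phi> \<in> S \<Longrightarrow> cmod (\<phi> v) \<le> \<epsilon> * norm v" using S_char by blast

lemma phi0_ex: "\<exists>\<phi>0\<in>S. \<forall>v. cmod (\<phi>0 v) \<le> norm v / norm e"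
proof -
  obtain \<Phi> where c: "clin_fun sm \<Phi>" and h: "hermf \<Phi>" and b: "\<And>v. cmod (\<Phi> v) \<le> norm v"
    and pe: "\<Phi> e = complex_of_real (norm e)"
    using complex_HB[OF eh] by blast
  define \<phi>0 where "\<phi>0 v = \<Phi> v / complex_of_real (norm e)" for v
  have "clin_fun sm \<phi>0" using c unfolding clin_fun_def \<phi>0_def by (simp add: add_divide_distrib)
  moreover have "hermf \<phi>0" using h unfolding hermf_def \<phi>0_def by simp
  moreover have "\<phi>0 e = 1" unfolding \<phi>0_def pe using ne_pos by simp
  moreover have bb: "cmod (\<phi>0 v) \<le> norm v / norm e" for v
    unfolding \<phi>0_def using b[of v] ne_pos by (simp add: norm_divide divide_right_mono)
  moreover have "cmod (\<phi>0 v) \<le> \<epsilon> * norm v" for v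
  proof -
    have "norm v / norm e = (1 / norm e) * norm v" by simp
    also have "\<dots> \<le> \<epsilon> * norm v" using eps by (intro mult_right_mono) auto
    finally show ?thesis using bb[of v] by linarith
  qed
  ultimately show ?thesis using S_char by blast
qed

end

context ctx begin

definition "tt = (\<epsilon> - 1 / norm e) / 2"
definition "a0 = min (1 / (2 * norm e)) (tt / 4)"

lemma tt_pos: "0 < tt" unfolding tt_def using eps by simp
lemma a0_pos: "0 < a0" unfolding a0_def using tt_pos ne_pos by simp

lemma low_herm:
  assumes hh: "st h = h"
  shows "\<exists>s\<in>S. a0 * norm h \<le> cmod (s h)"
proof -
  obtain \<phi>0 where p0S: "\<phi>0 \<in> S" and b0: "\<And>v. cmod (\<phi>0 v) \<le> norm v / norm e"
    using phi0_ex by blast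
  obtain \<psi> where pc: "clin_fun sm \<psi>" and ph: "hermf \<psi>" and pb: "\<And>v. cmod (\<psi> v) \<le> norm v"
    and psih: "\<psi> h = complex_of_real (norm h)"
    using complex_HB[OF hh] by blast
  define c where "c = Re (\<psi> e)"
  have pe: "\<psi> e = complex_of_real c" unfolding c_def using hermf_real[OF ph eh] .
  have cb: "\<bar>c\<bar> \<le> norm e" using pb[of e] pe by simp
  have c0: "clin_fun sm \<phi>0" using S_clin[OF p0S] .
  have h0: "hermf \<phi>0" using S_herm[OF p0S] .
  define \<phi> where "\<phi> v = \<phi>0 v + complex_of_real tt * (\<psi> v - complex_of_real c * \<phi>0 v)" for v
  have "clin_fun sm \<phi>" unfolding clin_fun_def \<phi>_def
    by (simp add: clin_add[OF c0] clin_add[OF pc] clin_sm[OF c0] clin_sm[OF pc] algebra_simps)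
  moreover have "hermf \<phi>" unfolding hermf_def \<phi>_def
    using h0 ph unfolding hermf_def by simp
  moreover have "\<phi> e = 1" unfolding \<phi>_def using S_e[OF p0S] pe by simp
  moreover have "cmod (\<phi> v) \<le> \<epsilon> * norm v" for v
  proof -
    have "cmod (\<phi> v) \<le> cmod (\<phi>0 v) + tt * (cmod (\<psi> v) + \<bar>c\<bar> * cmod (\<phi>0 v))"
    proof -
      have "cmod (\<phi> v) \<le> cmod (\<phi>0 v) + cmod (complex_of_real tt * (\<psi> v - complex_of_real c * \<phi>0 v))"
        unfolding \<phi>_def by (rule norm_triangle_ineq)
      also have "cmod (complex_of_real tt * (\<psi> v - complex_of_real c * \<phi>0 v))
          = tt * cmod (\<psi> v - complex_of_real c * \<phi>0 v)"
        using tt_pos by (simp add: norm_mult)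
      also have "\<dots> \<le> tt * (cmod (\<psi> v) + \<bar>c\<bar> * cmod (\<phi>0 v))"
        using tt_pos norm_triangle_ineq4[of "\<psi> v" "complex_of_real c * \<phi>0 v"]
        by (intro mult_left_mono) (auto simp: norm_mult)
      finally show ?thesis by simp
    qed
    also have "\<dots> \<le> norm v / norm e + tt * (norm v + norm v)"
    proof -
      have "\<bar>c\<bar> * cmod (\<phi>0 v) \<le> norm e * (norm v / norm e)"
        using cb b0[of v] by (intro mult_mono) auto
      then have "\<bar>c\<bar> * cmod (\<phi>0 v) \<le> norm v" using ne_pos by simp
      then have "tt * (cmod (\<psi> v) + \<bar>c\<bar> * cmod (\<phi>0 v)) \<le> tt * (norm v + norm v)"
        using pb[of v] tt_pos by (intro mult_left_mono) auto
      then show ?thesis using b0[of v] by linarith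
    qed
    also have "\<dots> = \<epsilon> * norm v" unfolding tt_def by (simp add: field_simps)
    finally show ?thesis .
  qed
  ultimately have pS: "\<phi> \<in> S" using S_char by blast
  show ?thesis
  proof (cases "norm h / (2 * norm e) \<le> cmod (\<phi>0 h)")
    case True
    have "a0 * norm h \<le> (1 / (2 * norm e)) * norm h" unfolding a0_def
      by (intro mult_right_mono) auto
    then have "a0 * norm h \<le> cmod (\<phi>0 h)" using True by simp
    then show ?thesis using p0S by blast
  next
    case False
    have "\<phi> h - \<phi>0 h = complex_of_real tt * (complex_of_real (norm h) - complex_of_real c * \<phi>0 h)"
      unfolding \<phi>_def psih by simp
    then have eq: "cmod (\<phi> h - \<phi>0 h) = tt * cmod (complex_of_real (norm h) - complex_of_real c * \<phi>0 h)"
      using tt_pos by (simp add: norm_mult)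
    have "\<bar>c\<bar> * cmod (\<phi>0 h) \<le> norm e * (norm h / (2 * norm e))"
      using cb False by (intro mult_mono) auto
    then have "\<bar>c\<bar> * cmod (\<phi>0 h) \<le> norm h / 2" using ne_pos by simp
    moreover have "norm h - \<bar>c\<bar> * cmod (\<phi>0 h) \<le> cmod (complex_of_real (norm h) - complex_of_real c * \<phi>0 h)"
      using norm_triangle_ineq2[of "complex_of_real (norm h)" "complex_of_real c * \<phi>0 h"]
      by (simp add: norm_mult)
    ultimately have "norm h / 2 \<le> cmod (complex_of_real (norm h) - complex_of_real c * \<phi>0 h)" by linarith
    then have "tt * (norm h / 2) \<le> cmod (\<phi> h - \<phi>0 h)" unfolding eq using tt_pos
      by (intro mult_left_mono) auto
    moreover have "cmod (\<phi> h - \<phi>0 h) \<le> cmod (\<phi> h) + cmod (\<phi>0 h)" by (rule norm_triangle_ineq4)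
    moreover have "a0 * norm h \<le> tt / 4 * norm h" unfolding a0_def by (intro mult_right_mono) auto
    ultimately have "a0 * norm h \<le> cmod (\<phi> h) \<or> a0 * norm h \<le> cmod (\<phi>0 h)" by linarith
    then show ?thesis using pS p0S by blast
  qed
qed

lemma S_real: "s \<in> S \<Longrightarrow> st h = h \<Longrightarrow> s h = complex_of_real (Re (s h))"
  using hermf_real[OF S_herm] by blast

lemma low_all: "\<exists>s\<in>S. (a0 / 2) * norm v \<le> cmod (s v)"
proof -
  define h where "h = hp v"
  define k where "k = kp v"
  have hh: "st h = h" and kh: "st k = k" unfolding h_def k_def by (simp_all add: hp_herm kp_herm)
  have vd: "v = h + sm \<i> k" unfolding h_def k_def by (rule decomp)
  have nv: "norm v \<le> norm h + norm k"
    using norm_triangle_ineq[of h "sm \<i> k"] vd by (simp add: norm_sm)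
  have sv: "cmod (s h) \<le> cmod (s v) \<and> cmod (s k) \<le> cmod (s v)" if sS: "s \<in> S" for s
  proof -
    have cs: "clin_fun sm s" using S_clin[OF sS] .
    have "s (h + sm \<i> k) = s h + \<i> * s k" by (simp add: clin_add[OF cs] clin_sm[OF cs])
    then have svv: "s v = s h + \<i> * s k" using vd by simp
    have rh: "s h = complex_of_real (Re (s h))" using S_real[OF sS hh] .
    have rk: "s k = complex_of_real (Re (s k))" using S_real[OF sS kh] .
    obtain x y where x: "s h = complex_of_real x" and y: "s k = complex_of_real y"
      using rh rk by blast
    have "Re (s v) = x" "Im (s v) = y" using svv x y by simp_all
    moreover have "cmod (s h) = \<bar>x\<bar>" "cmod (s k) = \<bar>y\<bar>" using x y by simp_all
    ultimately show ?thesis using abs_Re_le_cmod[of "s v"] abs_Im_le_cmod[of "s v"] by simp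
  qed
  show ?thesis
  proof (cases "norm k \<le> norm h")
    case True
    obtain s where sS: "s \<in> S" and "a0 * norm h \<le> cmod (s h)" using low_herm[OF hh] by blast
    moreover have "(a0 / 2) * norm v \<le> (a0 / 2) * (2 * norm h)" using nv True a0_pos
      by (intro mult_left_mono) auto
    ultimately have "(a0 / 2) * norm v \<le> cmod (s v)" using sv[OF sS] by simp
    then show ?thesis using sS by blast
  next
    case False
    obtain s where sS: "s \<in> S" and "a0 * norm k \<le> cmod (s k)" using low_herm[OF kh] by blast
    moreover have "(a0 / 2) * norm v \<le> (a0 / 2) * (2 * norm k)" using nv False a0_pos
      by (intro mult_left_mono) auto
    ultimately have "(a0 / 2) * norm v \<le> cmod (s v)" using sv[OF sS] by simp
    then show ?thesis using sS by blast
  qed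
qed

end

context ctx begin

lemma coord_cont: "continuous_on UNIV (\<lambda>\<phi>::'v \<Rightarrow> complex. \<phi> x)"
  by (rule continuous_on_product_coordinates)

lemma S_closed: "closed S"
proof -
  have eq: "S = {\<phi>. (\<forall>x. \<forall>y. \<phi> (x + y) = \<phi> x + \<phi> y) \<and> (\<forall>a. \<forall>x. \<phi> (sm a x) = a * \<phi> x) \<and>
      (\<forall>v. \<phi> (st v) = cnj (\<phi> v)) \<and> \<phi> e = 1 \<and> (\<forall>v. cmod (\<phi> v) \<le> \<epsilon> * norm v)}"
  proof (rule set_eqI)
    fix \<phi> :: "'v \<Rightarrow> complex"
    show "\<phi> \<in> S \<longleftrightarrow> \<phi> \<in> {\<phi>. (\<forall>x. \<forall>y. \<phi> (x + y) = \<phi> x + \<phi> y) \<and> (\<forall>a. \<forall>x. \<phi> (sm a x) = a * \<phi> x) \<and>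
      (\<forall>v. \<phi> (st v) = cnj (\<phi> v)) \<and> \<phi> e = 1 \<and> (\<forall>v. cmod (\<phi> v) \<le> \<epsilon> * norm v)}"
      unfolding S_char[of \<phi>] clin_fun_def hermf_def mem_Collect_eq by (simp only: conj_assoc)
  qed
  have c1: "continuous_on UNIV (\<lambda>\<phi>::'v \<Rightarrow> complex. f (\<phi> x))" if "continuous_on UNIV f" for f :: "complex \<Rightarrow> 'b::topological_space" and x
    by (rule continuous_on_compose2[OF that coord_cont]) auto
  have cc: "continuous_on UNIV (\<lambda>\<phi>::'v \<Rightarrow> complex. cnj (\<phi> x))" for x
    using c1[OF continuous_on_cnj[OF continuous_on_id]] by simp
  have cn: "continuous_on UNIV (\<lambda>\<phi>::'v \<Rightarrow> complex. cmod (\<phi> x))" for x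
    using c1[OF continuous_on_norm[OF continuous_on_id]] by simp
  have k1: "closed {\<phi>::'v \<Rightarrow> complex. \<forall>x y. \<phi> (x + y) = \<phi> x + \<phi> y}"
    by (intro closed_Collect_all closed_Collect_eq continuous_on_add coord_cont)
  have k2: "closed {\<phi>::'v \<Rightarrow> complex. \<forall>a x. \<phi> (sm a x) = a * \<phi> x}"
    by (intro closed_Collect_all closed_Collect_eq continuous_on_mult continuous_on_const coord_cont)
  have k3: "closed {\<phi>::'v \<Rightarrow> complex. \<forall>v. \<phi> (st v) = cnj (\<phi> v)}"
    by (intro closed_Collect_all closed_Collect_eq cc coord_cont)
  have k4: "closed {\<phi>::'v \<Rightarrow> complex. \<phi> e = 1}"
    by (intro closed_Collect_eq continuous_on_const coord_cont)
  have k5: "closed {\<phi>::'v \<Rightarrow> complex. \<forall>v. cmod (\<phi> v) \<le> \<epsilon> * norm v}"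
    by (intro closed_Collect_all closed_Collect_le continuous_on_const cn)
  show ?thesis unfolding eq
    by (intro closed_Collect_conj k1 k2 k3 k4 k5)

qed

lemma S_compact: "compact S"
proof -
  define B :: "('v \<Rightarrow> complex) set" where "B = PiE UNIV (\<lambda>v. cball 0 (\<epsilon> * norm v))"
  have "compactin (product_topology (\<lambda>_. euclidean) UNIV) B"
    unfolding B_def compactin_PiE by simp
  then have cB: "compact B" by (simp add: euclidean_product_topology)
  have "S \<subseteq> B" unfolding B_def using S_bound by (auto simp: PiE_def)
  then have "S = B \<inter> S" by blast
  then show ?thesis using compact_Int_closed[OF cB S_closed] by simp
qed

end

context ctx begin

abbreviation "cc \<equiv> cone_eps sm st e \<epsilon>"

lemma c_mem: "v \<in> cc \<longleftrightarrow> st v = v \<and> (\<forall>s\<in>S. cnonneg (s v))"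
  unfolding cone_eps_def herm_part_def by simp

lemma shift:
  assumes hh: "st h = h"
  shows "h + (\<epsilon> * norm h) *\<^sub>R e \<in> cc"
  unfolding c_mem
proof (intro conjI ballI)
  show "st (h + (\<epsilon> * norm h) *\<^sub>R e) = h + (\<epsilon> * norm h) *\<^sub>R e"
    by (simp add: st_add st_scaleR hh eh)
next
  fix s assume sS: "s \<in> S"
  have cs: "clin_fun sm s" using S_clin[OF sS] .
  obtain x where x: "s h = complex_of_real x" using S_real[OF sS hh] by blast
  have "\<bar>x\<bar> \<le> \<epsilon> * norm h" using S_bound[OF sS, of h] x by simp
  moreover have "s (h + (\<epsilon> * norm h) *\<^sub>R e) = complex_of_real (x + \<epsilon> * norm h)"
    using x S_e[OF sS] by (simp add: clin_add[OF cs] clin_scaleR[OF cs])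
  ultimately show "cnonneg (s (h + (\<epsilon> * norm h) *\<^sub>R e))" unfolding cnonneg_def by simp
qed

lemma low0: "(\<And>s. s \<in> S \<Longrightarrow> s v = 0) \<Longrightarrow> v = 0"
proof -
  assume a: "\<And>s. s \<in> S \<Longrightarrow> s v = 0"
  obtain s where "s \<in> S" "(a0 / 2) * norm v \<le> cmod (s v)" using low_all by blast
  moreover have "cmod (s v) = 0" using a[OF \<open>s \<in> S\<close>] by simp
  ultimately have "(a0 / 2) * norm v \<le> 0" by linarith
  then have "norm v \<le> 0" using a0_pos by (simp add: mult_le_0_iff)
  then show "v = 0" by simp
qed

lemma cone_ok: "is_cone st cc"
  unfolding is_cone_def
proof (intro conjI ballI allI impI)
  show "cc \<subseteq> herm_part st" unfolding cone_eps_def by auto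
  have "0 \<in> cc" unfolding c_mem cnonneg_def
  proof (intro conjI ballI)
    show "st 0 = 0" by (rule st_zero)
  next
    fix s assume "s \<in> S"
    then have "s 0 = 0" using clin_zero[OF S_clin] by blast
    then show "Im (s 0) = 0" "0 \<le> Re (s 0)" by simp_all
  qed
  then show "cc \<noteq> {}" by blast
next
  fix x y assume x: "x \<in> cc" and y: "y \<in> cc"
  show "x + y \<in> cc" unfolding c_mem
  proof (intro conjI ballI)
    show "st (x + y) = x + y" using x y c_mem st_add by simp
  next
    fix s assume sS: "s \<in> S"
    have "cnonneg (s x)" "cnonneg (s y)" using x y sS c_mem by auto
    then show "cnonneg (s (x + y))" using clin_add[OF S_clin[OF sS]] unfolding cnonneg_def by simp
  qed
next
  fix x and r :: real assume x: "x \<in> cc" and r: "0 \<le> r"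
  show "r *\<^sub>R x \<in> cc" unfolding c_mem
  proof (intro conjI ballI)
    show "st (r *\<^sub>R x) = r *\<^sub>R x" using x c_mem st_scaleR by simp
  next
    fix s assume sS: "s \<in> S"
    have "cnonneg (s x)" using x sS c_mem by auto
    then show "cnonneg (s (r *\<^sub>R x))" using clin_scaleR[OF S_clin[OF sS]] r unfolding cnonneg_def by simp
  qed
qed

lemma sep_ok: "separated_cone cc"
  unfolding separated_cone_def
proof
  show "cc \<inter> uminus ` cc \<subseteq> {0}"
  proof
    fix v assume "v \<in> cc \<inter> uminus ` cc"
    then obtain w where v: "v \<in> cc" and w: "w \<in> cc" and vw: "v = - w" by auto
    have "s v = 0" if sS: "s \<in> S" for s
    proof -
      have "cnonneg (s v)" "cnonneg (s w)" using v w sS c_mem by auto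
      moreover have "s v = - s w" using vw clin_minus[OF S_clin[OF sS]] by simp
      ultimately show ?thesis unfolding cnonneg_def by (simp add: complex_eq_iff)
    qed
    then show "v \<in> {0}" using low0 by auto
  qed
next
  have "0 \<in> cc" unfolding c_mem cnonneg_def
  proof (intro conjI ballI)
    show "st 0 = 0" by (rule st_zero)
  next
    fix s assume "s \<in> S"
    then have "s 0 = 0" using clin_zero[OF S_clin] by blast
    then show "Im (s 0) = 0" "0 \<le> Re (s 0)" by simp_all
  qed
  then show "{0} \<subseteq> cc \<inter> uminus ` cc" by (auto intro: image_eqI[of 0 _ 0])
qed

lemma S_bl: "s \<in> S \<Longrightarrow> bounded_linear s"
proof -
  assume sS: "s \<in> S"
  have cs: "clin_fun sm s" using S_clin[OF sS] .
  show ?thesis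
  proof (rule bounded_linear_intro[of s \<epsilon>])
    show "s (x + y) = s x + s y" for x y by (rule clin_add[OF cs])
    show "s (r *\<^sub>R x) = r *\<^sub>R s x" for r x by (simp add: clin_scaleR[OF cs] scaleR_conv_of_real)
    show "norm (s x) \<le> norm x * \<epsilon>" for x using S_bound[OF sS, of x] by (simp add: mult.commute)
  qed
qed

lemma st_bl: "bounded_linear st"
proof (rule bounded_linear_intro[of st 1])
  show "st (x + y) = st x + st y" for x y by (rule st_add)
  show "st (r *\<^sub>R x) = r *\<^sub>R st x" for r x by (rule st_scaleR)
  show "norm (st x) \<le> norm x * 1" for x by (simp add: norm_st)
qed

lemma closed_ok: "closed cc"
proof -
  have eq: "cc = {v. st v = v} \<inter> (\<Inter>s\<in>S. {v. Im (s v) = 0} \<inter> {v. 0 \<le> Re (s v)})"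
    unfolding cone_eps_def herm_part_def cnonneg_def by auto
  have cRe: "continuous_on UNIV (\<lambda>v. Re (s v))" "continuous_on UNIV (\<lambda>v. Im (s v))" if "s \<in> S" for s
    using linear_continuous_on[OF bounded_linear_compose[OF bounded_linear_Re S_bl[OF that]]]
      linear_continuous_on[OF bounded_linear_compose[OF bounded_linear_Im S_bl[OF that]]]
    by auto
  have "closed {v. st v = v}"
    by (rule closed_Collect_eq[OF linear_continuous_on[OF st_bl] continuous_on_id])
  moreover have "closed (\<Inter>s\<in>S. {v. Im (s v) = 0} \<inter> {v. 0 \<le> Re (s v)})"
  proof (rule closed_INT, intro ballI)
    fix s assume sS: "s \<in> S"
    show "closed ({v. Im (s v) = 0} \<inter> {v. 0 \<le> Re (s v)})"
      by (intro closed_Int closed_Collect_eq closed_Collect_le continuous_on_const cRe[OF sS])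
  qed
  ultimately show ?thesis unfolding eq by (rule closed_Int)
qed

lemma unital_ok: "unital_cone st e cc"
  unfolding unital_cone_def herm_part_def
proof (intro ballI)
  fix v assume "v \<in> {v. st v = v}"
  then have "st v = v" by simp
  then show "\<exists>r\<ge>0. v + r *\<^sub>R e \<in> cc" using shift eps_pos by (intro exI[of _ "\<epsilon> * norm v"]) auto
qed

lemma pos_real:
  assumes c: "clin_fun sm \<phi>" and p: "\<forall>v\<in>cc. cnonneg (\<phi> v)" and e1: "\<phi> e = 1" and hh: "st h = h"
  shows "Im (\<phi> h) = 0 \<and> \<bar>Re (\<phi> h)\<bar> \<le> \<epsilon> * norm h"
proof -
  define r where "r = \<epsilon> * norm h"
  have "h + r *\<^sub>R e \<in> cc" unfolding r_def by (rule shift[OF hh])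
  moreover have "st (- h) = - h" using hh st_minus by simp
  then have "- h + r *\<^sub>R e \<in> cc" unfolding r_def using shift[of "- h"] by simp
  ultimately have a1: "cnonneg (\<phi> (h + r *\<^sub>R e))" and a2: "cnonneg (\<phi> (- h + r *\<^sub>R e))" using p by auto
  have "\<phi> (h + r *\<^sub>R e) = \<phi> h + complex_of_real r"
    by (simp only: clin_add[OF c] clin_scaleR[OF c] e1) simp
  moreover have "\<phi> (- h + r *\<^sub>R e) = - \<phi> h + complex_of_real r"
    by (simp only: clin_add[OF c] clin_minus[OF c] clin_scaleR[OF c] e1) simp
  ultimately have "cnonneg (\<phi> h + complex_of_real r)" "cnonneg (- \<phi> h + complex_of_real r)"
    using a1 a2 by simp_all
  then show ?thesis unfolding cnonneg_def r_def by auto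
qed

lemma state_ok: "state_space sm e cc = S"
proof
  show "S \<subseteq> state_space sm e cc"
    unfolding state_space_def using S_clin S_e c_mem by auto
next
  show "state_space sm e cc \<subseteq> S"
  proof
    fix \<phi> assume "\<phi> \<in> state_space sm e cc"
    then have c: "clin_fun sm \<phi>" and p: "\<forall>v\<in>cc. cnonneg (\<phi> v)" and e1: "\<phi> e = 1"
      unfolding state_space_def by auto
    have rl: "\<phi> h = complex_of_real (Re (\<phi> h))" if "st h = h" for h
      using pos_real[OF c p e1 that] by (simp add: complex_eq_iff)
    have hf: "hermf \<phi>" unfolding hermf_def
    proof
      fix v
      define h k where "h = hp v" and "k = kp v"
      have hh: "st h = h" and kh: "st k = k" unfolding h_def k_def by (simp_all add: hp_herm kp_herm)
      have vd: "v = h + sm \<i> k" unfolding h_def k_def by (rule decomp)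
      have "st v = st (h + sm \<i> k)" using vd by simp
      also have "\<dots> = h + sm (- \<i>) k" by (simp add: st_add st_sm hh kh)
      finally have sv: "st v = h + sm (- \<i>) k" .
      obtain x y where x: "\<phi> h = complex_of_real x" and y: "\<phi> k = complex_of_real y"
        using rl[OF hh] rl[OF kh] by blast
      have "\<phi> (st v) = \<phi> h - \<i> * \<phi> k" using sv by (simp add: clin_add[OF c] clin_sm[OF c])
      moreover have "\<phi> v = \<phi> h + \<i> * \<phi> k" using vd by (simp add: clin_add[OF c] clin_sm[OF c])
      ultimately show "\<phi> (st v) = cnj (\<phi> v)" using x y by simp
    qed
    have "cmod (\<phi> v) \<le> \<epsilon> * norm v" for v
    proof (rule hermf_bound[OF c hf])
      show "0 \<le> \<epsilon>" using eps_pos by simp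
    next
      fix h assume hh: "st h = h"
      have "cmod (\<phi> h) = \<bar>Re (\<phi> h)\<bar>" using rl[OF hh] by (metis norm_of_real)
      then show "cmod (\<phi> h) \<le> \<epsilon> * norm h" using pos_real[OF c p e1 hh] by simp
    qed
    then show "\<phi> \<in> S" using S_char c hf e1 by blast
  qed
qed

lemma S_ne: "S \<noteq> {}" using phi0_ex by blast

lemma cfs_ok: "concrete_function_system sm st e cc S"
  unfolding concrete_function_system_def
proof (intro conjI)
  show "S \<subseteq> state_space sm e cc" using state_ok by simp
  show "compact S" by (rule S_compact)
  show "\<forall>v. continuous_on S (\<lambda>\<phi>. \<phi> v)"
    using continuous_on_subset[OF coord_cont] by blast
  show "\<forall>\<phi>\<in>S. \<phi> e = 1" using S_e by blast
  show "\<forall>v. \<forall>\<phi>\<in>S. \<phi> (st v) = cnj (\<phi> v)" using S_herm unfolding hermf_def by blast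
  show "inj_on (\<lambda>v. restrict (\<lambda>\<phi>. \<phi> v) S) UNIV"
  proof (rule inj_onI)
    fix v w assume eqr: "restrict (\<lambda>\<phi>. \<phi> v) S = restrict (\<lambda>\<phi>. \<phi> w) S"
    have "s v = s w" if "s \<in> S" for s using fun_cong[OF eqr, of s] that by simp
    then have "s (v - w) = 0" if "s \<in> S" for s using that clin_diff[OF S_clin[OF that]] by simp
    then have "v - w = 0" by (rule low0)
    then show "v = w" by simp
  qed
  show "(\<lambda>v. restrict (\<lambda>\<phi>. \<phi> v) S) ` cc =
       (\<lambda>v. restrict (\<lambda>\<phi>. \<phi> v) S) ` herm_part st \<inter> {f. \<forall>\<phi>\<in>S. cnonneg (f \<phi>)}"
  proof
    show "(\<lambda>v. restrict (\<lambda>\<phi>. \<phi> v) S) ` cc \<subseteq>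
       (\<lambda>v. restrict (\<lambda>\<phi>. \<phi> v) S) ` herm_part st \<inter> {f. \<forall>\<phi>\<in>S. cnonneg (f \<phi>)}"
    proof
      fix f assume "f \<in> (\<lambda>v. restrict (\<lambda>\<phi>. \<phi> v) S) ` cc"
      then obtain v where v: "v \<in> cc" and f: "f = restrict (\<lambda>\<phi>. \<phi> v) S" by blast
      have "v \<in> herm_part st" using v c_mem unfolding herm_part_def by simp
      moreover have "\<forall>\<phi>\<in>S. cnonneg (f \<phi>)" using v c_mem f by simp
      ultimately show "f \<in> (\<lambda>v. restrict (\<lambda>\<phi>. \<phi> v) S) ` herm_part st \<inter> {f. \<forall>\<phi>\<in>S. cnonneg (f \<phi>)}"
        using f by blast
    qed
    show "(\<lambda>v. restrict (\<lambda>\<phi>. \<phi> v) S) ` herm_part st \<inter> {f. \<forall>\<phi>\<in>S. cnonneg (f \<phi>)} \<subseteq>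
       (\<lambda>v. restrict (\<lambda>\<phi>. \<phi> v) S) ` cc"
    proof
      fix f assume "f \<in> (\<lambda>v. restrict (\<lambda>\<phi>. \<phi> v) S) ` herm_part st \<inter> {f. \<forall>\<phi>\<in>S. cnonneg (f \<phi>)}"
      then obtain v where v: "v \<in> herm_part st" and f: "f = restrict (\<lambda>\<phi>. \<phi> v) S"
        and p: "\<forall>\<phi>\<in>S. cnonneg (f \<phi>)" by blast
      have "v \<in> cc" unfolding c_mem using v p f unfolding herm_part_def by simp
      then show "f \<in> (\<lambda>v. restrict (\<lambda>\<phi>. \<phi> v) S) ` cc" using f by blast
    qed
  qed
qed

lemma norm_ok: "\<exists>a b. 0 < a \<and> 0 < b \<and>
            (\<forall>v. a * norm v \<le> norm_eps sm st e \<epsilon> v \<and> norm_eps sm st e \<epsilon> v \<le> b * norm v)"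
proof (intro exI conjI allI)
  show "0 < a0 / 2" using a0_pos by simp
  show "0 < \<epsilon>" by (rule eps_pos)
  fix v
  have bdd: "bdd_above ((\<lambda>s. cmod (s v)) ` S)" unfolding bdd_above_def using S_bound by blast
  show "norm_eps sm st e \<epsilon> v \<le> \<epsilon> * norm v"
    unfolding norm_eps_def using S_ne S_bound by (intro cSUP_least) auto
  obtain s where sS: "s \<in> S" and "(a0 / 2) * norm v \<le> cmod (s v)" using low_all by blast
  moreover have "cmod (s v) \<le> norm_eps sm st e \<epsilon> v"
    unfolding norm_eps_def by (rule cSUP_upper[OF sS bdd])
  ultimately show "a0 / 2 * norm v \<le> norm_eps sm st e \<epsilon> v" by linarith
qed

end

theorem theorem4p5:
  fixes sm :: "complex \<Rightarrow> 'v::real_normed_vector \<Rightarrow> 'v"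
    and st :: "'v \<Rightarrow> 'v" and e :: 'v and \<epsilon> :: real
  assumes "unital_star_normed_space sm st e"
    and "\<epsilon> > 1 / norm e"
  shows "is_cone st (cone_eps sm st e \<epsilon>) \<and>
         separated_cone (cone_eps sm st e \<epsilon>) \<and>
         closed (cone_eps sm st e \<epsilon>) \<and>
         unital_cone st e (cone_eps sm st e \<epsilon>) \<and>
         state_space sm e (cone_eps sm st e \<epsilon>) = S_eps sm st e \<epsilon> \<and>
         concrete_function_system sm st e (cone_eps sm st e \<epsilon>) (S_eps sm st e \<epsilon>) \<and>
         (\<exists>a b. 0 < a \<and> 0 < b \<and>
            (\<forall>v. a * norm v \<le> norm_eps sm st e \<epsilon> v \<and> norm_eps sm st e \<epsilon> v \<le> b * norm v))"
proof -
  have "star_normed_space sm st" "st e = e" "e \<noteq> 0"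
    using assms(1) unfolding unital_star_normed_space_def herm_part_def by auto
  then interpret ctx sm st e \<epsilon> using assms(2) by unfold_locales auto
  show ?thesis
    by (intro conjI cone_ok sep_ok closed_ok unital_ok state_ok cfs_ok norm_ok)
qed

end
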